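(* For $n\ge3$ and $1\le k<n$, let $X_k:=\#\{i:\rho(i)=k\}$. Then $X_k\in\{0,1,2\}$, \[ \mathbf E(X_k)=\frac{2k}{n-1},\qquad \mathbf{Var}(X_k)=\frac{2k(n-k-1)(n-3)}{(n-1)^2(n-2)}, \] and for $1\le k<l<n$, \[ \mathbf{Cov}(X_k,X_l)=-\frac{4k(n-l-1)}{(n-1)^2(n-2)}. \]
   Context: Kingman's $n$-coalescent: partitions $\pi_1=\{\{1,\dots,n\}\},\pi_2,\dots,\pi_n=\{\{1\},\dots,\{n\}\}$ of $\{1,\dots,n\}$, where $\pi_k$ has $k$ blocks and $\pi_{k-1}$ is obtained from $\pi_k$ by merging two blocks of $\pi_k$ chosen uniformly at random (independently of the past). For a leaf $i$ let $\rho(i):=\max\{k\ge1:\{i\}\notin\pi_k\}$. *)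

theory Defs
  imports "HOL-Probability.Probability"
begin

definition merge_blocks :: "'a set set \<Rightarrow> 'a set set \<Rightarrow> 'a set set" where
  "merge_blocks P AB = (P - AB) \<union> {\<Union>AB}"

definition coal_step :: "'a set set \<Rightarrow> 'a set set pmf" where
  "coal_step P = map_pmf (merge_blocks P)
     (pmf_of_set {{A, B} | A B. A \<in> P \<and> B \<in> P \<and> A \<noteq> B})"

fun coal_path :: "'a set set \<Rightarrow> nat \<Rightarrow> 'a set set list pmf" where
  "coal_path P 0 = return_pmf [P]"
| "coal_path P (Suc m) = bind_pmf (coal_step P) (\<lambda>Q. map_pmf (\<lambda>L. P # L) (coal_path Q m))"

text \<open>Kingman's n-coalescent on {1..n}: the list [pi_n, pi_(n-1), ..., pi_1].\<close>
definition kingman :: "nat \<Rightarrow> nat set set list pmf" where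
  "kingman n = coal_path ((\<lambda>i. {i}) ` {1..n}) (n - 1)"

definition part :: "nat \<Rightarrow> nat set set list \<Rightarrow> nat \<Rightarrow> nat set set" where
  "part n L k = L ! (n - k)"

definition rho :: "nat \<Rightarrow> nat set set list \<Rightarrow> nat \<Rightarrow> nat" where
  "rho n L i = Max {k \<in> {1..n}. {i} \<notin> part n L k}"

definition Xk :: "nat \<Rightarrow> nat \<Rightarrow> nat set set list \<Rightarrow> nat" where
  "Xk n k L = card {i \<in> {1..n}. rho n L i = k}"

end

theory Submission
  imports Defs
begin

definition SI :: "'a set set \<Rightarrow> 'a set" where "SI Q = {i. {i} \<in> Q}"
definition sc :: "'a set set \<Rightarrow> nat" where "sc Q = card (SI Q)"
definition Sing :: "'a set set \<Rightarrow> 'a set set" where "Sing P = {A\<in>P. \<exists>i. A = {i}}"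
definition valid :: "'a set set \<Rightarrow> bool" where
  "valid P \<longleftrightarrow> finite P \<and> {} \<notin> P \<and> (\<forall>A\<in>P. finite A) \<and> pairwise disjnt P"
definition Pairs :: "'a set set \<Rightarrow> 'a set set set" where
  "Pairs P = {{A, B} | A B. A \<in> P \<and> B \<in> P \<and> A \<noteq> B}"

lemma Pairs_eq: "Pairs P = {B. B \<subseteq> P \<and> card B = 2}"
  unfolding Pairs_def by (auto simp: card_2_iff)

lemma coal_step_alt: "coal_step P = map_pmf (merge_blocks P) (pmf_of_set (Pairs P))"
  unfolding coal_step_def Pairs_def by simp

lemma finite_SI: "finite P \<Longrightarrow> finite (SI P)"
  unfolding SI_def by (rule finite_vimageI[of P "\<lambda>i. {i}", simplified vimage_def]) (auto simp: inj_on_def)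

lemma Sing_img: "Sing P = (\<lambda>i. {i}) ` SI P"
  unfolding Sing_def SI_def by auto

lemma card_Sing: "card (Sing P) = sc P"
  unfolding Sing_img sc_def by (rule card_image) (auto simp: inj_on_def)

lemma Pairs_fin: "finite P \<Longrightarrow> finite (Pairs P)"
  unfolding Pairs_eq by (rule finite_subset[of _ "Pow P"]) auto

lemma Pairs_ne: "finite P \<Longrightarrow> 2 \<le> card P \<Longrightarrow> Pairs P \<noteq> {}"
proof -
  assume "finite P" "2 \<le> card P"
  then have "card (Pairs P) = card P choose 2" unfolding Pairs_eq by (simp add: n_subsets)
  moreover have "card P choose 2 > 0" using \<open>2 \<le> card P\<close> by simp
  ultimately show ?thesis by auto
qed

lemma merge_props:
  assumes v: "valid P" and AB: "A \<in> P" "B \<in> P" "A \<noteq> B"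
  defines "Q \<equiv> merge_blocks P {A, B}"
  shows "valid Q" "card Q = card P - 1" "\<Union>Q = \<Union>P"
    "SI Q = SI P - {i. {i} = A \<or> {i} = B}" "sc Q < card Q"
proof -
  have fin: "finite P" and ne: "{} \<notin> P" and fA: "\<forall>A\<in>P. finite A" and dj: "pairwise disjnt P"
    using v by (auto simp: valid_def)
  have dAB: "disjnt A B" using dj AB by (auto simp: pairwise_def)
  have Ane: "A \<noteq> {}" "B \<noteq> {}" using ne AB by auto
  have notin: "A \<union> B \<notin> P - {A, B}"
  proof
    assume "A \<union> B \<in> P - {A, B}"
    then obtain C where C: "C \<in> P" "C \<noteq> A" "C = A \<union> B" by auto
    have "disjnt C A" using dj AB C(1,2) unfolding pairwise_def by blast
    then show False using C Ane unfolding disjnt_def by blast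
  qed
  have Qe: "Q = insert (A \<union> B) (P - {A, B})" unfolding Q_def merge_blocks_def by auto
  have nsing: "\<And>i. A \<union> B \<noteq> {i}"
  proof
    fix i assume "A \<union> B = {i}"
    then have "A = {i}" "B = {i}" using Ane by (metis Un_empty_left Un_upper1 subset_singletonD, metis Un_empty_right Un_upper2 subset_singletonD)
    then show False using AB by simp
  qed
  have "card {A, B} \<le> card P" using fin AB by (intro card_mono) auto
  then have c2: "2 \<le> card P" using AB by simp
  show "card Q = card P - 1" unfolding Qe using fin notin AB c2 by (simp add: card_Diff_subset)
  show "\<Union>Q = \<Union>P" unfolding Qe using AB by auto
  show SIQ: "SI Q = SI P - {i. {i} = A \<or> {i} = B}" unfolding Qe SI_def using nsing by auto
  show "valid Q" unfolding valid_def Qe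
  proof (intro conjI)
    show "pairwise disjnt (insert (A \<union> B) (P - {A, B}))"
      using dj AB unfolding pairwise_def disjnt_def by blast
  qed (use fin ne fA AB Ane in auto)
  have "Sing Q \<subseteq> Q - {A \<union> B}" unfolding Sing_def using nsing by auto
  moreover have fQ: "finite Q" using fin unfolding Qe by simp
  ultimately have "card (Sing Q) \<le> card (Q - {A \<union> B})" by (intro card_mono) auto
  also have "\<dots> < card Q" using fQ by (intro psubset_card_mono) (auto simp: Qe)
  finally have "card (Sing Q) < card Q" .
  then show "sc Q < card Q" by (simp add: card_Sing)
qed

lemma real_choose2: "real (n choose 2) = real n * (real n - 1) / 2"
proof -
  have "n choose 2 = n * (n - 1) div 2" by (simp add: choose_two)
  moreover have "even (n * (n - 1))" by (cases "even n") auto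
  ultimately have "2 * (n choose 2) = n * (n - 1)" by simp
  then have "2 * real (n choose 2) = real n * real (n - 1)" by (metis of_nat_mult of_nat_numeral)
  moreover have "real n * real (n - 1) = real n * (real n - 1)" by (cases n) auto
  ultimately show ?thesis by (cases n) auto
qed

lemma sc_merge:
  assumes v: "valid P" and B: "B \<in> Pairs P"
  shows "real (sc (merge_blocks P B)) = real (sc P) - real (card (B \<inter> Sing P))"
proof -
  obtain A C where AC: "B = {A, C}" "A \<in> P" "C \<in> P" "A \<noteq> C" using B unfolding Pairs_def by auto
  have fin: "finite P" using v by (simp add: valid_def)
  have e: "SI (merge_blocks P B) = SI P - {i. {i} = A \<or> {i} = C}" using merge_props(4)[OF v AC(2-4)] AC(1) by simp
  have sub: "{i. {i} = A \<or> {i} = C} \<subseteq> SI P" using AC unfolding SI_def by auto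
  have "card {i. {i} = A \<or> {i} = C} = card (B \<inter> Sing P)"
  proof -
    have "B \<inter> Sing P = (\<lambda>i. {i}) ` {i. {i} = A \<or> {i} = C}" using AC unfolding Sing_def by auto
    then show ?thesis by (simp add: card_image inj_on_def)
  qed
  moreover have "card (SI (merge_blocks P B)) = card (SI P) - card {i. {i} = A \<or> {i} = C}"
    unfolding e using card_Diff_subset[OF finite_subset[OF sub finite_SI[OF fin]] sub] .
  moreover have "card {i. {i} = A \<or> {i} = C} \<le> card (SI P)" using sub finite_SI[OF fin] by (simp add: card_mono)
  ultimately show ?thesis unfolding sc_def by simp
qed

definition stepE :: "real \<Rightarrow> real \<Rightarrow> (real \<Rightarrow> real) \<Rightarrow> real" where
  "stepE j s g = (s*(s-1)/2 * g (s-2) + s*(j-s) * g (s-1) + (j-s)*(j-s-1)/2 * g s) / (j*(j-1)/2)"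

lemma step_expect:
  assumes v: "valid P" and j: "card P = j" "2 \<le> j"
  shows "measure_pmf.expectation (coal_step P) (\<lambda>Q. g (real (sc Q))) = stepE (real j) (real (sc P)) g"
proof -
  have fin: "finite P" using v by (simp add: valid_def)
  define s where "s = sc P"
  have fPa: "finite (Pairs P)" using Pairs_fin[OF fin] .
  have nePa: "Pairs P \<noteq> {}" using Pairs_ne[OF fin] j by simp
  have SingP: "Sing P \<subseteq> P" unfolding Sing_def by auto
  have cS: "card (Sing P) = s" by (simp add: card_Sing s_def)
  have sj: "s \<le> j" using card_mono[OF fin SingP] cS j by simp
  define T2 where "T2 = {B. B \<subseteq> Sing P \<and> card B = 2}"
  define T0 where "T0 = {B. B \<subseteq> P - Sing P \<and> card B = 2}"
  define T1 where "T1 = Pairs P - T2 - T0"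
  have T2s: "T2 \<subseteq> Pairs P" "T0 \<subseteq> Pairs P" unfolding T2_def T0_def Pairs_eq using SingP by auto
  have cT2: "card T2 = s choose 2" unfolding T2_def using n_subsets[of "Sing P" 2] fin SingP cS finite_subset by auto
  have cPS: "card (P - Sing P) = j - s" using card_Diff_subset[OF finite_subset[OF SingP fin] SingP] cS j by simp
  have cT0: "card T0 = (j - s) choose 2" unfolding T0_def using n_subsets[of "P - Sing P" 2] fin cPS by auto
  have cPa: "card (Pairs P) = j choose 2" unfolding Pairs_eq using n_subsets[of P 2] fin j by auto
  have dj: "T2 \<inter> T0 = {}"
  proof (rule ccontr)
    assume "T2 \<inter> T0 \<noteq> {}"
    then obtain B where "B \<subseteq> Sing P" "B \<subseteq> P - Sing P" "card B = 2" unfolding T2_def T0_def by auto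
    then have "B = {}" by blast
    with \<open>card B = 2\<close> show False by simp
  qed
  have cT1: "card T1 = card (Pairs P) - card T2 - card T0"
  proof -
    have "T1 = Pairs P - (T2 \<union> T0)" unfolding T1_def by blast
    then have "card T1 = card (Pairs P - (T2 \<union> T0))" by simp
    also have "\<dots> = card (Pairs P) - card (T2 \<union> T0)" using T2s fPa by (intro card_Diff_subset) (auto intro: finite_subset)
    also have "card (T2 \<union> T0) = card T2 + card T0" using dj T2s fPa by (intro card_Un_disjoint) (auto intro: finite_subset)
    finally show ?thesis by simp
  qed
  have le: "card T2 + card T0 \<le> card (Pairs P)"
  proof -
    have "card (T2 \<union> T0) \<le> card (Pairs P)" using T2s fPa by (intro card_mono) auto
    moreover have "card (T2 \<union> T0) = card T2 + card T0" using dj T2s fPa by (intro card_Un_disjoint) (auto intro: finite_subset)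
    ultimately show ?thesis by simp
  qed
  have rT1: "real (card T1) = real s * (real j - real s)"
    using cT1 le unfolding cPa cT2 cT0 by (simp add: of_nat_diff real_choose2 sj algebra_simps) (simp add: field_simps)
  define f where "f B = g (real (sc (merge_blocks P B)))" for B
  have f2: "f B = g (real s - 2)" if "B \<in> T2" for B
  proof -
    have "B \<inter> Sing P = B" "card B = 2" using that unfolding T2_def by auto
    then show ?thesis using that T2s unfolding f_def by (subst sc_merge[OF v]) (auto simp: s_def)
  qed
  have f0: "f B = g (real s)" if "B \<in> T0" for B
  proof -
    have "B \<inter> Sing P = {}" using that unfolding T0_def by auto
    then show ?thesis using that T2s unfolding f_def by (subst sc_merge[OF v]) (auto simp: s_def)
  qed
  have f1: "f B = g (real s - 1)" if "B \<in> T1" for B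
  proof -
    have B: "B \<subseteq> P" "card B = 2" "\<not> B \<subseteq> Sing P" "\<not> B \<subseteq> P - Sing P" "B \<in> Pairs P"
      using that unfolding T1_def T2_def T0_def Pairs_eq by auto
    then obtain x y where xy: "B = {x, y}" "x \<noteq> y" by (auto simp: card_2_iff)
    have "card (B \<inter> Sing P) = 1"
      using B(1,3,4) unfolding xy by (cases "x \<in> Sing P"; cases "y \<in> Sing P") auto
    then show ?thesis using B(5) unfolding f_def by (subst sc_merge[OF v]) (auto simp: s_def)
  qed
  have "sum f (Pairs P) = sum f T2 + sum f T0 + sum f T1"
  proof -
    have U: "Pairs P = (T2 \<union> T0) \<union> T1" unfolding T1_def using T2s by auto
    have "sum f ((T2 \<union> T0) \<union> T1) = sum f (T2 \<union> T0) + sum f T1"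
      by (rule sum.union_disjoint) (use T2s fPa in \<open>auto simp: T1_def intro: finite_subset\<close>)
    then have "sum f (Pairs P) = sum f (T2 \<union> T0) + sum f T1" using U by simp
    also have "sum f (T2 \<union> T0) = sum f T2 + sum f T0"
      using dj T2s fPa by (intro sum.union_disjoint) (auto intro: finite_subset)
    finally show ?thesis .
  qed
  also have "\<dots> = card T2 * g (real s - 2) + card T0 * g (real s) + card T1 * g (real s - 1)"
    using f2 f0 f1 by simp
  finally have S: "sum f (Pairs P) = card T2 * g (real s - 2) + card T0 * g (real s) + card T1 * g (real s - 1)" .
  have "measure_pmf.expectation (coal_step P) (\<lambda>Q. g (real (sc Q))) = sum f (Pairs P) / card (Pairs P)"
    unfolding coal_step_alt f_def by (simp add: integral_pmf_of_set[OF nePa fPa])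
  also have "\<dots> = stepE (real j) (real s) g"
    unfolding S stepE_def rT1 cT2 cT0 cPa real_choose2 using sj by (simp add: of_nat_diff algebra_simps)
  finally show ?thesis by (simp add: s_def)
qed

definition gam :: "nat \<Rightarrow> nat \<Rightarrow> real" where
  "gam j i = real i * (real i - 1) / (real j * (real j - 1))"
definition alp :: "nat \<Rightarrow> nat \<Rightarrow> real" where
  "alp j i = real i * (real i - 1)^2 * (real i - 2) / (real j * (real j - 1)^2 * (real j - 2))"
definition M2f :: "nat \<Rightarrow> real \<Rightarrow> nat \<Rightarrow> real" where
  "M2f j s i = alp j i * s^2 + (gam j i - alp j i) * s"

lemma stepE_quad:
  fixes j s a b :: real
  assumes "j \<noteq> 0" "j \<noteq> 1"
  shows "stepE j s (\<lambda>x. a * x^2 + b * x) =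
     a * (s^2 * (j - 2) * (j - 3) / (j * (j - 1)) + 2 * s * (j - 2) / (j * (j - 1))) + b * s * (j - 2) / j"
proof -
  have j1: "j - 1 \<noteq> 0" using assms by simp
  have e: "stepE j s g = (s * (s - 1) * g (s - 2) + 2 * s * (j - s) * g (s - 1) + (j - s) * (j - s - 1) * g s) / (j * (j - 1))" for g
    unfolding stepE_def using assms j1 by (simp add: field_simps)
  have key: "s * (s - 1) * (a * (s - 2)^2 + b * (s - 2)) + 2 * s * (j - s) * (a * (s - 1)^2 + b * (s - 1)) + (j - s) * (j - s - 1) * (a * s^2 + b * s)
     = a * (s^2 * (j - 2) * (j - 3) + 2 * s * (j - 2)) + b * s * (j - 2) * (j - 1)"
    by (simp add: algebra_simps power2_eq_square)
  show ?thesis unfolding e key using assms j1 by (simp add: divide_simps; simp add: algebra_simps power2_eq_square)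
qed

lemma stepA:
  assumes "2 \<le> j" "1 \<le> i" "i \<le> j - 1"
  shows "stepE (real j) s (\<lambda>x. gam (j-1) i * x) = gam j i * s"
proof -
  have q: "stepE (real j) s (\<lambda>x. gam (j-1) i * x) = gam (j-1) i * s * (real j - 2) / real j"
    using stepE_quad[of "real j" s 0 "gam (j-1) i"] assms by simp
  show ?thesis
  proof (cases "j = 2")
    case True
    then have "i = 1" using assms by simp
    then show ?thesis unfolding q using True by (simp add: gam_def)
  next
    case False
    then have j3: "real j - 2 \<noteq> 0" "real j - 1 \<noteq> 0" "real j \<noteq> 0" using assms by auto
    have "real (j - 1) = real j - 1" using assms by simp
    have g1: "gam (j-1) i = real i * (real i - 1) / ((real j - 1) * (real j - 2))"
      unfolding gam_def using assms by (simp add: of_nat_diff algebra_simps)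
    show ?thesis unfolding q unfolding g1 unfolding gam_def using j3 by (simp add: divide_simps; simp add: algebra_simps)
  qed
qed

lemma stepB:
  assumes "2 \<le> j" "1 \<le> i" "i \<le> j - 1"
  shows "stepE (real j) s (\<lambda>x. M2f (j-1) x i) = M2f j s i"
proof -
  have rj: "real (j - 1) = real j - 1" using assms by simp
  have q: "stepE (real j) s (\<lambda>x. M2f (j-1) x i) =
     alp (j-1) i * (s^2 * (real j - 2) * (real j - 3) / (real j * (real j - 1)) + 2 * s * (real j - 2) / (real j * (real j - 1)))
      + (gam (j-1) i - alp (j-1) i) * s * (real j - 2) / real j"
    using stepE_quad[of "real j" s "alp (j-1) i" "gam (j-1) i - alp (j-1) i"] assms
    unfolding M2f_def by simp
  consider "j = 2" | "j = 3" | "j \<ge> 4" using assms by linarith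
  then show ?thesis
  proof cases
    case 1
    then have "i = 1" using assms by simp
    then show ?thesis unfolding q unfolding M2f_def using 1 by (simp add: gam_def alp_def)
  next
    case 2
    then have "i = 1 \<or> i = 2" using assms by auto
    then show ?thesis unfolding q unfolding M2f_def using 2 by (auto simp: gam_def alp_def)
  next
    case 3
    then have j3: "real j - 2 \<noteq> 0" "real j - 1 \<noteq> 0" "real j \<noteq> 0" "real j - 3 \<noteq> 0" by auto
    have g1: "gam (j-1) i = real i * (real i - 1) / ((real j - 1) * (real j - 2))"
      unfolding gam_def using assms by (simp add: of_nat_diff algebra_simps)
    have a1: "alp (j-1) i = real i * (real i - 1)^2 * (real i - 2) / ((real j - 1) * (real j - 2)^2 * (real j - 3))"
      unfolding alp_def using assms by (simp add: of_nat_diff algebra_simps)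
    show ?thesis unfolding q unfolding g1 a1 unfolding M2f_def gam_def alp_def using j3
      by (simp add: divide_simps; simp add: algebra_simps power2_eq_square)
  qed
qed

lemma step_support:
  assumes v: "valid P" and c: "2 \<le> card P" and Q: "Q \<in> set_pmf (coal_step P)"
  shows "valid Q \<and> card Q = card P - 1 \<and> \<Union>Q = \<Union>P \<and> SI Q \<subseteq> SI P \<and> sc P \<le> sc Q + 2 \<and> sc Q < card Q"
proof -
  have fin: "finite P" using v by (simp add: valid_def)
  obtain B where B: "B \<in> Pairs P" "Q = merge_blocks P B"
    using Q Pairs_fin[OF fin] Pairs_ne[OF fin c] unfolding coal_step_alt by auto
  obtain A C where AC: "B = {A, C}" "A \<in> P" "C \<in> P" "A \<noteq> C" using B unfolding Pairs_def by auto
  note mp = merge_props[OF v AC(2-4)]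
  have "card (B \<inter> Sing P) \<le> card B" by (rule card_mono) (auto simp: AC)
  also have "card B = 2" using AC by simp
  finally have "real (sc P) \<le> real (sc Q) + 2" using sc_merge[OF v B(1)] B(2) by simp
  then have "sc P \<le> sc Q + 2" by linarith
  then show ?thesis using mp B AC by auto
qed

lemma step_finite: "finite P \<Longrightarrow> 2 \<le> card P \<Longrightarrow> finite (set_pmf (coal_step P))"
  unfolding coal_step_alt using Pairs_fin[of P] Pairs_ne[of P] by simp

lemma path_head: "L \<in> set_pmf (coal_path P m) \<Longrightarrow> L ! 0 = P"
  by (cases m) auto

lemma path_support:
  "valid P \<Longrightarrow> m < card P \<Longrightarrow> L \<in> set_pmf (coal_path P m) \<Longrightarrow>
    length L = Suc m \<and> (\<forall>t\<le>m. valid (L!t) \<and> card (L!t) = card P - t \<and> \<Union>(L!t) = \<Union>P) \<and>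
    (\<forall>t<m. SI (L!Suc t) \<subseteq> SI (L!t) \<and> sc (L!t) \<le> sc (L!Suc t) + 2)"
proof (induction m arbitrary: P L)
  case 0
  then show ?case by auto
next
  case (Suc m)
  from Suc.prems(3) obtain Q L' where QL: "Q \<in> set_pmf (coal_step P)" "L' \<in> set_pmf (coal_path Q m)" "L = P # L'"
    by auto
  have c2: "2 \<le> card P" using Suc.prems by simp
  note sp = step_support[OF Suc.prems(1) c2 QL(1)]
  have IH: "length L' = Suc m \<and> (\<forall>t\<le>m. valid (L'!t) \<and> card (L'!t) = card Q - t \<and> \<Union>(L'!t) = \<Union>Q) \<and>
    (\<forall>t<m. SI (L'!Suc t) \<subseteq> SI (L'!t) \<and> sc (L'!t) \<le> sc (L'!Suc t) + 2)"
    using Suc.IH[of Q L'] sp Suc.prems QL by auto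
  have h0: "L' ! 0 = Q" using path_head[OF QL(2)] .
  show ?case
  proof (intro conjI allI impI)
    show "length L = Suc (Suc m)" using IH QL by simp
  next
    fix t assume "t \<le> Suc m"
    then show "valid (L!t)" "card (L!t) = card P - t" "\<Union>(L!t) = \<Union>P"
      using IH sp Suc.prems QL(3) by (cases t; auto)+
  next
    fix t assume "t < Suc m"
    then show "SI (L!Suc t) \<subseteq> SI (L!t)" "sc (L!t) \<le> sc (L!Suc t) + 2"
      using IH sp QL(3) h0 by (cases t; auto)+
  qed
qed

lemma path_finite: "valid P \<Longrightarrow> m < card P \<Longrightarrow> finite (set_pmf (coal_path P m))"
proof (induction m arbitrary: P)
  case 0
  then show ?case by simp
next
  case (Suc m)
  have c2: "2 \<le> card P" using Suc.prems by simp
  have fin: "finite P" using Suc.prems by (simp add: valid_def)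
  have "finite (\<Union>Q\<in>set_pmf (coal_step P). set_pmf (map_pmf ((#) P) (coal_path Q m)))"
    using step_finite[OF fin c2] Suc.IH step_support[OF Suc.prems(1) c2] Suc.prems by auto
  then show ?case by simp
qed

lemma E_bind:
  fixes h :: "'b \<Rightarrow> real"
  assumes "finite (set_pmf p)" "\<And>x. x \<in> set_pmf p \<Longrightarrow> finite (set_pmf (f x))"
  shows "measure_pmf.expectation (bind_pmf p f) h = measure_pmf.expectation p (\<lambda>x. measure_pmf.expectation (f x) h)"
  using assms by (simp add: pmf_expectation_bind[of "set_pmf p"] integral_measure_pmf[of "set_pmf p"])

lemma E_cong:
  fixes f g :: "'a \<Rightarrow> real"
  shows "(\<And>x. x \<in> set_pmf p \<Longrightarrow> f x = g x) \<Longrightarrow> measure_pmf.expectation p f = measure_pmf.expectation p g"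
  by (rule integral_cong_AE) (auto intro: AE_pmfI)

lemma E_path_Suc:
  fixes h :: "'a set set list \<Rightarrow> real"
  assumes v: "valid P" and m: "Suc m < card P"
  shows "measure_pmf.expectation (coal_path P (Suc m)) h =
    measure_pmf.expectation (coal_step P) (\<lambda>Q. measure_pmf.expectation (coal_path Q m) (\<lambda>L. h (P # L)))"
proof -
  have c2: "2 \<le> card P" using m by simp
  have fin: "finite P" using v by (simp add: valid_def)
  have "finite (set_pmf (map_pmf ((#) P) (coal_path Q m)))" if Q: "Q \<in> set_pmf (coal_step P)" for Q
  proof -
    have "valid Q" "m < card Q" using step_support[OF v c2 Q] m by auto
    then show ?thesis using path_finite by auto
  qed
  then show ?thesis
    unfolding coal_path.simps
    by (subst E_bind) (use step_finite[OF fin c2] in auto)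
qed

abbreviation CC :: "'a set set \<Rightarrow> bool" where "CC P \<equiv> 3 \<le> card P \<or> sc P < card P"

lemma gam_top: "CC P \<Longrightarrow> card P = j \<Longrightarrow> gam j j * real (sc P) = real (sc P)"
  unfolding gam_def by (cases "j \<ge> 2") auto

lemma E1:
  "valid P \<Longrightarrow> card P = j \<Longrightarrow> CC P \<Longrightarrow> u \<le> m \<Longrightarrow> m < j \<Longrightarrow>
   measure_pmf.expectation (coal_path P m) (\<lambda>L. real (sc (L!u))) = gam j (j-u) * real (sc P)"
proof (induction m arbitrary: P j u)
  case 0
  then have "u = 0" by simp
  then show ?case using gam_top[of P j] 0 by simp
next
  case (Suc m)
  show ?case
  proof (cases u)
    case 0
    have "measure_pmf.expectation (coal_path P (Suc m)) (\<lambda>L. real (sc (L!u))) =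
          measure_pmf.expectation (coal_path P (Suc m)) (\<lambda>L. real (sc P))"
    proof (rule E_cong)
      fix L assume "L \<in> set_pmf (coal_path P (Suc m))"
      from path_head[OF this] show "real (sc (L!u)) = real (sc P)" using 0 by simp
    qed
    then show ?thesis using gam_top[of P j] Suc.prems 0 by simp
  next
    case (Suc u')
    have c2: "2 \<le> j" using Suc.prems by simp
    have "measure_pmf.expectation (coal_path P (Suc m)) (\<lambda>L. real (sc (L!u))) =
      measure_pmf.expectation (coal_step P) (\<lambda>Q. measure_pmf.expectation (coal_path Q m) (\<lambda>L. real (sc (L!u'))))"
      using E_path_Suc[OF Suc.prems(1)] Suc.prems Suc by simp
    also have "\<dots> = measure_pmf.expectation (coal_step P) (\<lambda>Q. gam (j-1) (j - u) * real (sc Q))"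
    proof (rule E_cong)
      fix Q assume Q: "Q \<in> set_pmf (coal_step P)"
      note sp = step_support[OF Suc.prems(1) _ Q]
      have "measure_pmf.expectation (coal_path Q m) (\<lambda>L. real (sc (L!u'))) = gam (j-1) (j-1-u') * real (sc Q)"
        using Suc.IH[of Q "j-1" u'] sp Suc.prems Suc by auto
      then show "measure_pmf.expectation (coal_path Q m) (\<lambda>L. real (sc (L!u'))) = gam (j-1) (j - u) * real (sc Q)"
        using Suc by simp
    qed
    also have "\<dots> = stepE (real j) (real (sc P)) (\<lambda>x. gam (j-1) (j-u) * x)"
      by (rule step_expect) (use Suc.prems c2 in auto)
    also have "\<dots> = gam j (j-u) * real (sc P)"
      by (rule stepA) (use Suc.prems Suc in auto)
    finally show ?thesis .
  qed
qed

lemma M2f_top: "CC P \<Longrightarrow> card P = j \<Longrightarrow> 1 \<le> j \<Longrightarrow> gam j i * M2f j (real (sc P)) j = gam j i * real (sc P)^2"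
proof -
  assume C: "CC P" and j: "card P = j" "1 \<le> j"
  consider "j = 1" | "j = 2" | "j \<ge> 3" using j by linarith
  then show ?thesis
  proof cases
    case 1 then show ?thesis by (simp add: gam_def)
  next
    case 2
    then have "sc P \<le> 1" using C j by auto
    then have "real (sc P)^2 = real (sc P)" by (cases "sc P") auto
    then show ?thesis using 2 by (simp add: M2f_def gam_def alp_def)
  next
    case 3
    then have "real j \<noteq> 0" "real j - 1 \<noteq> 0" "real j - 2 \<noteq> 0" by auto
    then show ?thesis by (simp add: M2f_def gam_def alp_def)
  qed
qed

lemma E2:
  "valid P \<Longrightarrow> card P = j \<Longrightarrow> CC P \<Longrightarrow> t \<le> u \<Longrightarrow> u \<le> m \<Longrightarrow> m < j \<Longrightarrow>
   measure_pmf.expectation (coal_path P m) (\<lambda>L. real (sc (L!t)) * real (sc (L!u))) = gam (j-t) (j-u) * M2f j (real (sc P)) (j-t)"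
proof (induction m arbitrary: P j t u)
  case 0
  then have "u = 0" "t = 0" by auto
  have a: "gam j j * M2f j (real (sc P)) j = gam j j * real (sc P)^2" using M2f_top[of P j j] 0 by simp
  have b: "gam j j * real (sc P) = real (sc P)" using gam_top[of P j] 0 by simp
  show ?case
  proof (cases "sc P = 0")
    case True then show ?thesis using a \<open>u = 0\<close> \<open>t = 0\<close> by simp
  next
    case False then have "gam j j = 1" using b by simp
    then show ?thesis using a \<open>u = 0\<close> \<open>t = 0\<close> by (simp add: power2_eq_square)
  qed
next
  case (Suc m)
  show ?case
  proof (cases t)
    case 0
    have "measure_pmf.expectation (coal_path P (Suc m)) (\<lambda>L. real (sc (L!t)) * real (sc (L!u))) =
          measure_pmf.expectation (coal_path P (Suc m)) (\<lambda>L. real (sc P) * real (sc (L!u)))"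
    proof (rule E_cong)
      fix L assume "L \<in> set_pmf (coal_path P (Suc m))"
      from path_head[OF this] show "real (sc (L!t)) * real (sc (L!u)) = real (sc P) * real (sc (L!u))" using 0 by simp
    qed
    also have "\<dots> = real (sc P) * (gam j (j-u) * real (sc P))"
      using E1[of P j u "Suc m"] Suc.prems by simp
    also have "\<dots> = gam j (j-u) * real (sc P)^2" by (simp add: power2_eq_square)
    also have "\<dots> = gam (j-t) (j-u) * M2f j (real (sc P)) (j-t)"
      using M2f_top[of P j "j-u"] Suc.prems 0 by (simp, metis)
    finally show ?thesis .
  next
    case (Suc t')
    then obtain u' where u': "u = Suc u'" using Suc.prems by (cases u) auto
    have c2: "2 \<le> j" using Suc.prems by simp
    have "measure_pmf.expectation (coal_path P (Suc m)) (\<lambda>L. real (sc (L!t)) * real (sc (L!u))) =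
      measure_pmf.expectation (coal_step P) (\<lambda>Q. measure_pmf.expectation (coal_path Q m) (\<lambda>L. real (sc (L!t')) * real (sc (L!u'))))"
      using E_path_Suc[OF Suc.prems(1)] Suc.prems Suc u' by simp
    also have "\<dots> = measure_pmf.expectation (coal_step P) (\<lambda>Q. gam (j-t) (j-u) * M2f (j-1) (real (sc Q)) (j-t))"
    proof (rule E_cong)
      fix Q assume Q: "Q \<in> set_pmf (coal_step P)"
      note sp = step_support[OF Suc.prems(1) _ Q]
      have "measure_pmf.expectation (coal_path Q m) (\<lambda>L. real (sc (L!t')) * real (sc (L!u'))) =
           gam (j-1-t') (j-1-u') * M2f (j-1) (real (sc Q)) (j-1-t')"
        using Suc.IH[of Q "j-1" t' u'] sp Suc.prems Suc u' by auto
      then show "measure_pmf.expectation (coal_path Q m) (\<lambda>L. real (sc (L!t')) * real (sc (L!u'))) =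
           gam (j-t) (j-u) * M2f (j-1) (real (sc Q)) (j-t)"
        using Suc u' by simp
    qed
    also have "\<dots> = gam (j-t) (j-u) * measure_pmf.expectation (coal_step P) (\<lambda>Q. M2f (j-1) (real (sc Q)) (j-t))"
      by simp
    also have "measure_pmf.expectation (coal_step P) (\<lambda>Q. M2f (j-1) (real (sc Q)) (j-t)) = stepE (real j) (real (sc P)) (\<lambda>x. M2f (j-1) x (j-t))"
      by (rule step_expect) (use Suc.prems c2 in auto)
    also have "\<dots> = M2f j (real (sc P)) (j-t)"
      by (rule stepB) (use Suc.prems Suc in auto)
    finally show ?thesis .
  qed
qed

lemma SI_chain:
  assumes "\<forall>t<m. SI (L!Suc t) \<subseteq> SI (L!t)" "t \<le> u" "u \<le> m"
  shows "SI (L!u) \<subseteq> SI (L!t)"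
  using assms(2,3)
proof (induction u)
  case 0 then show ?case by simp
next
  case (Suc u)
  show ?case
  proof (cases "t = Suc u")
    case False
    then have "SI (L!u) \<subseteq> SI (L!t)" using Suc by simp
    moreover have "SI (L!Suc u) \<subseteq> SI (L!u)" using assms(1) Suc.prems by simp
    ultimately show ?thesis by blast
  qed simp
qed

definition P0 :: "nat \<Rightarrow> nat set set" where "P0 n = (\<lambda>i. {i}) ` {1..n}"

lemma P0_props: "valid (P0 n)" "card (P0 n) = n" "SI (P0 n) = {1..n}" "sc (P0 n) = n" "\<Union>(P0 n) = {1..n}"
proof -
  show "card (P0 n) = n" unfolding P0_def by (subst card_image) (auto simp: inj_on_def)
  show "SI (P0 n) = {1..n}" unfolding P0_def SI_def by auto
  then show "sc (P0 n) = n" unfolding sc_def by simp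
  show "\<Union>(P0 n) = {1..n}" unfolding P0_def by auto
  show "valid (P0 n)" unfolding P0_def valid_def pairwise_def disjnt_def by auto
qed

lemma kingman_eq: "kingman n = coal_path (P0 n) (n - 1)"
  unfolding kingman_def P0_def ..

lemma Xk_support:
  assumes n: "n \<ge> 3" and L: "L \<in> set_pmf (kingman n)" and k: "1 \<le> k" "k < n"
  shows "sc (L!(n-k)) \<le> sc (L!(n-(k+1))) \<and> sc (L!(n-(k+1))) \<le> sc (L!(n-k)) + 2 \<and>
         Xk n k L = sc (L!(n-(k+1))) - sc (L!(n-k))"
proof -
  have L': "L \<in> set_pmf (coal_path (P0 n) (n-1))" using L kingman_eq by simp
  note ps = path_support[OF P0_props(1) _ L', unfolded P0_props(2)]
  have ps: "length L = n" "\<And>t. t \<le> n-1 \<Longrightarrow> valid (L!t) \<and> card (L!t) = n - t \<and> \<Union>(L!t) = {1..n}"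
    "\<And>t. t < n-1 \<Longrightarrow> SI (L!Suc t) \<subseteq> SI (L!t) \<and> sc (L!t) \<le> sc (L!Suc t) + 2"
    using ps n P0_props(5) by auto
  have ch: "SI (L!u) \<subseteq> SI (L!t)" if "t \<le> u" "u \<le> n-1" for t u
    using SI_chain[of "n-1" L t u] ps(3) that by blast
  have SIsub: "SI (L!t) \<subseteq> {1..n}" if "t \<le> n-1" for t
    using ps(2)[OF that] unfolding SI_def by auto
  have finSI: "finite (SI (L!t))" if "t \<le> n-1" for t using SIsub[OF that] finite_subset by blast
  have last: "SI (L!(n-1)) = {}"
  proof -
    have "card (L!(n-1)) = 1" "\<Union>(L!(n-1)) = {1..n}" using ps(2)[of "n-1"] n by auto
    then obtain B where B: "L!(n-1) = {B}" "B = {1..n}" by (auto simp: card_1_singleton_iff)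
    have "{i} \<noteq> {1..n}" for i :: nat
    proof
      assume "{i} = {1..n}"
      then have "1 \<in> {i}" "2 \<in> {i}" using n by auto
      then show False by simp
    qed
    then show ?thesis using B unfolding SI_def by auto
  qed
  define D where "D i = {k \<in> {1..n}. i \<notin> SI (L!(n-k))}" for i
  have rhoD: "rho n L i = Max (D i)" for i unfolding rho_def D_def part_def SI_def by simp
  have dc: "k'' \<in> D i" if "k' \<in> D i" "1 \<le> k''" "k'' \<le> k'" for i k' k''
  proof -
    have "n - k' \<le> n - k''" "n - k'' \<le> n - 1" using that by auto
    then have "SI (L!(n-k'')) \<subseteq> SI (L!(n-k'))" using ch by blast
    then show ?thesis using that unfolding D_def by auto
  qed
  have oneD: "1 \<in> D i" for i unfolding D_def using last n by auto
  have finD: "finite (D i)" for i unfolding D_def by auto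
  have rho_iff: "rho n L i = k \<longleftrightarrow> i \<in> SI (L!(n-(k+1))) - SI (L!(n-k))" for i
  proof
    assume r: "rho n L i = k"
    have kD: "k \<in> D i" using Max_in[OF finD] oneD r rhoD by (metis empty_iff)
    have "k+1 \<notin> D i" using Max_ge[OF finD, of "k+1" i] r rhoD by auto
    then show "i \<in> SI (L!(n-(k+1))) - SI (L!(n-k))" using kD k unfolding D_def by auto
  next
    assume a: "i \<in> SI (L!(n-(k+1))) - SI (L!(n-k))"
    have kD: "k \<in> D i" unfolding D_def using a k by simp
    have k1: "k+1 \<notin> D i" unfolding D_def using a k by simp
    have "Max (D i) = k"
    proof (rule Max_eqI[OF finD])
      fix y assume "y \<in> D i"
      show "y \<le> k"
      proof (rule ccontr)
        assume "\<not> y \<le> k"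
        then have "k+1 \<in> D i" using dc[OF \<open>y \<in> D i\<close>, of "k+1"] by auto
        with k1 show False by simp
      qed
    qed (rule kD)
    then show "rho n L i = k" using rhoD by simp
  qed
  have sub: "SI (L!(n-k)) \<subseteq> SI (L!(n-(k+1)))" using ch[of "n-(k+1)" "n-k"] k by auto
  have "{i \<in> {1..n}. rho n L i = k} = SI (L!(n-(k+1))) - SI (L!(n-k))"
  proof -
    have "SI (L!(n-(k+1))) \<subseteq> {1..n}" using SIsub[of "n-(k+1)"] k by simp
    then show ?thesis using rho_iff by blast
  qed
  then have X: "Xk n k L = sc (L!(n-(k+1))) - sc (L!(n-k))"
  proof -
    have "finite (SI (L!(n-k)))" using finSI[of "n-k"] k by simp
    then show ?thesis unfolding Xk_def sc_def using sub \<open>{i \<in> {1..n}. rho n L i = k} = _\<close> by (simp add: card_Diff_subset)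
  qed
  have "sc (L!(n-k)) \<le> sc (L!(n-(k+1)))" unfolding sc_def using sub finSI[of "n-(k+1)"] by (simp add: card_mono)
  moreover have "sc (L!(n-(k+1))) \<le> sc (L!(n-k)) + 2"
  proof -
    have "n-(k+1) < n-1" "Suc (n-(k+1)) = n-k" using k by auto
    then show ?thesis using ps(3)[of "n-(k+1)"] by simp
  qed
  ultimately show ?thesis using X by simp
qed

lemma cr_eq:
  assumes "n \<ge> 3" "1 \<le> b" "b \<le> a" "a \<le> n"
  shows "gam a b * M2f n (real n) a = real b * (real b - 1) * ((real n - 2) + (real a - 1) * (real a - 2)) / ((real n - 1) * (real n - 2))"
proof (cases "a = 1")
  case True
  then have "b = 1" using assms by simp
  then show ?thesis using True by (simp add: gam_def)
next
  case False
  then have nz: "real a \<noteq> 0" "real a - 1 \<noteq> 0" "real n \<noteq> 0" "real n - 1 \<noteq> 0" "real n - 2 \<noteq> 0"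
    using assms by auto
  show ?thesis unfolding M2f_def gam_def alp_def using nz
    by (simp add: divide_simps; simp add: algebra_simps power2_eq_square)
qed

theorem mainTheorem13:
  fixes n :: nat
  assumes "n \<ge> 3"
  shows "(\<forall>k. 1 \<le> k \<and> k < n \<longrightarrow>
           (\<forall>L \<in> set_pmf (kingman n). Xk n k L \<in> {0, 1, 2}) \<and>
           measure_pmf.expectation (kingman n) (\<lambda>L. real (Xk n k L)) = 2 * real k / (real n - 1) \<and>
           measure_pmf.variance (kingman n) (\<lambda>L. real (Xk n k L)) =
             2 * real k * (real n - real k - 1) * (real n - 3) / ((real n - 1)^2 * (real n - 2)))
       \<and> (\<forall>k l. 1 \<le> k \<and> k < l \<and> l < n \<longrightarrow>
           measure_pmf.expectation (kingman n)
             (\<lambda>L. (real (Xk n k L) - measure_pmf.expectation (kingman n) (\<lambda>L. real (Xk n k L))) *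
                  (real (Xk n l L) - measure_pmf.expectation (kingman n) (\<lambda>L. real (Xk n l L))))
           = - (4 * real k * (real n - real l - 1)) / ((real n - 1)^2 * (real n - 2)))"
proof -
  note n = assms
  define K where "K = kingman n"
  have K: "K = coal_path (P0 n) (n - 1)" unfolding K_def kingman_eq ..
  have finK: "finite (set_pmf K)" unfolding K using path_finite[OF P0_props(1)] P0_props(2) n by simp
  have int: "integrable (measure_pmf K) f" for f :: "_ \<Rightarrow> real" by (rule integrable_measure_pmf_finite[OF finK])
  define S where "S a (L :: nat set set list) = real (sc (L!(n-a)))" for a L
  have CC: "CC (P0 n)" using P0_props(2) n by simp
  have nr: "real n - 1 \<noteq> 0" "real n - 2 \<noteq> 0" "real n \<noteq> 0" using n by auto
  have ES: "measure_pmf.expectation K (S a) = real a * (real a - 1) / (real n - 1)" if "1 \<le> a" "a \<le> n" for a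
  proof -
    have "measure_pmf.expectation K (S a) = gam n (n - (n-a)) * real n"
      unfolding K S_def using E1[OF P0_props(1) P0_props(2) CC, of "n-a" "n-1"] that P0_props(4) by simp
    also have "\<dots> = real a * (real a - 1) / (real n - 1)"
      using that nr by (simp add: gam_def divide_simps)
    finally show ?thesis .
  qed
  define cr where "cr a b = real b * (real b - 1) * ((real n - 2) + (real a - 1) * (real a - 2)) / ((real n - 1) * (real n - 2))" for a b :: nat
  have ESS: "measure_pmf.expectation K (\<lambda>L. S a L * S b L) = cr a b" if "1 \<le> b" "b \<le> a" "a \<le> n" for a b
  proof -
    have "measure_pmf.expectation K (\<lambda>L. S a L * S b L) = gam (n - (n-a)) (n - (n-b)) * M2f n (real n) (n - (n-a))"
      unfolding K S_def using E2[OF P0_props(1) P0_props(2) CC, of "n-a" "n-b" "n-1"] that P0_props(4) by simp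
    also have "\<dots> = cr a b" unfolding cr_def using that n by (simp add: cr_eq)
    finally show ?thesis .
  qed
  have XS: "real (Xk n k L) = S (k+1) L - S k L" if "L \<in> set_pmf K" "1 \<le> k" "k < n" for k L
    using Xk_support[OF n _ that(2,3)] that(1) unfolding K_def S_def by (simp add: of_nat_diff)
  have EX: "measure_pmf.expectation K (\<lambda>L. real (Xk n k L)) = 2 * real k / (real n - 1)" if k: "1 \<le> k" "k < n" for k
  proof -
    have "measure_pmf.expectation K (\<lambda>L. real (Xk n k L)) = measure_pmf.expectation K (\<lambda>L. S (k+1) L - S k L)"
      by (rule E_cong) (use XS[OF _ k] in simp)
    also have "\<dots> = measure_pmf.expectation K (S (k+1)) - measure_pmf.expectation K (S k)"
      by (simp add: int)
    also have "\<dots> = real (k+1) * (real (k+1) - 1) / (real n - 1) - real k * (real k - 1) / (real n - 1)"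
      using ES[of "k+1"] ES[of k] k by simp
    also have "\<dots> = 2 * real k / (real n - 1)" using nr
      by (simp add: divide_simps; simp add: algebra_simps)
    finally show ?thesis .
  qed
  show ?thesis
  proof (intro conjI allI impI)
    fix k assume k: "1 \<le> k \<and> k < n"
    have k1: "1 \<le> k" and k2: "k < n" using k by auto
    show "\<forall>L \<in> set_pmf (kingman n). Xk n k L \<in> {0, 1, 2}"
    proof
      fix L assume "L \<in> set_pmf (kingman n)"
      from Xk_support[OF n this, of k] k have "Xk n k L = sc (L!(n-(k+1))) - sc (L!(n-k))"
        "sc (L!(n-(k+1))) \<le> sc (L!(n-k)) + 2" by auto
      then have "Xk n k L \<le> 2" by linarith
      then show "Xk n k L \<in> {0, 1, 2}" by auto
    qed
    show "measure_pmf.expectation (kingman n) (\<lambda>L. real (Xk n k L)) = 2 * real k / (real n - 1)"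
      using EX k unfolding K_def by simp
    have V: "measure_pmf.variance K (\<lambda>L. real (Xk n k L)) =
        measure_pmf.expectation K (\<lambda>L. (real (Xk n k L))^2) - (measure_pmf.expectation K (\<lambda>L. real (Xk n k L)))^2"
      by (rule measure_pmf.variance_eq) (rule int)+
    have E2: "measure_pmf.expectation K (\<lambda>L. (real (Xk n k L))^2) =
        measure_pmf.expectation K (\<lambda>L. S (k+1) L * S (k+1) L - 2 * (S (k+1) L * S k L) + S k L * S k L)"
    proof (rule E_cong)
      fix L assume L: "L \<in> set_pmf K"
      have e: "real (Xk n k L) = S (k+1) L - S k L" using XS[OF L k1 k2] .
      show "(real (Xk n k L))^2 = S (k+1) L * S (k+1) L - 2 * (S (k+1) L * S k L) + S k L * S k L"
        by (subst e) (simp add: power2_eq_square algebra_simps)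
    qed
    also have "\<dots> = cr (k+1) (k+1) - 2 * cr (k+1) k + cr k k"
      using ESS[of "k+1" "k+1"] ESS[of k "k+1"] ESS[of k k] k by (simp add: int)
    finally have E2': "measure_pmf.expectation K (\<lambda>L. (real (Xk n k L))^2) = cr (k+1) (k+1) - 2 * cr (k+1) k + cr k k" .
    have alg: "cr (k+1) (k+1) - 2 * cr (k+1) k + cr k k - (2 * real k / (real n - 1))^2 =
             2 * real k * (real n - real k - 1) * (real n - 3) / ((real n - 1)^2 * (real n - 2))"
      unfolding cr_def using nr by (simp add: divide_simps; simp add: algebra_simps power2_eq_square)
    show "measure_pmf.variance (kingman n) (\<lambda>L. real (Xk n k L)) =
             2 * real k * (real n - real k - 1) * (real n - 3) / ((real n - 1)^2 * (real n - 2))"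
      unfolding K_def[symmetric] by (subst V, subst E2', subst EX[OF k1 k2], rule alg)
  next
    fix k l assume kl: "1 \<le> k \<and> k < l \<and> l < n"
    define ck where "ck = 2 * real k / (real n - 1)"
    define cl where "cl = 2 * real l / (real n - 1)"
    have k1: "1 \<le> k" "k < n" and l1: "1 \<le> l" "l < n" using kl by auto
    have C: "measure_pmf.expectation K
             (\<lambda>L. (real (Xk n k L) - measure_pmf.expectation K (\<lambda>L. real (Xk n k L))) *
                  (real (Xk n l L) - measure_pmf.expectation K (\<lambda>L. real (Xk n l L))))
        = measure_pmf.expectation K (\<lambda>L. S (l+1) L * S (k+1) L - S (l+1) L * S k L - S l L * S (k+1) L + S l L * S k L
             - cl * S (k+1) L + cl * S k L - ck * S (l+1) L + ck * S l L + ck * cl)"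
      unfolding EX[OF k1] EX[OF l1] ck_def[symmetric] cl_def[symmetric]
    proof (rule E_cong)
      fix L assume L: "L \<in> set_pmf K"
      have e1: "real (Xk n k L) = S (k+1) L - S k L" using XS[OF L k1] .
      have e2: "real (Xk n l L) = S (l+1) L - S l L" using XS[OF L l1] .
      show "(real (Xk n k L) - ck) * (real (Xk n l L) - cl) = S (l+1) L * S (k+1) L - S (l+1) L * S k L - S l L * S (k+1) L + S l L * S k L
             - cl * S (k+1) L + cl * S k L - ck * S (l+1) L + ck * S l L + ck * cl"
        by (subst e1, subst e2) (simp add: algebra_simps)
    qed
    also have "\<dots> = cr (l+1) (k+1) - cr (l+1) k - cr l (k+1) + cr l k
         - cl * (real (k+1) * (real (k+1) - 1) / (real n - 1)) + cl * (real k * (real k - 1) / (real n - 1))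
         - ck * (real (l+1) * (real (l+1) - 1) / (real n - 1)) + ck * (real l * (real l - 1) / (real n - 1)) + ck * cl"
      using ESS[of "k+1" "l+1"] ESS[of k "l+1"] ESS[of "k+1" l] ESS[of k l] ES[of "k+1"] ES[of k] ES[of "l+1"] ES[of l] kl
      by (simp add: int)
    also have "\<dots> = - (4 * real k * (real n - real l - 1)) / ((real n - 1)^2 * (real n - 2))"
      unfolding cr_def ck_def cl_def using nr by (simp add: divide_simps; simp add: algebra_simps power2_eq_square)
    finally show "measure_pmf.expectation (kingman n)
             (\<lambda>L. (real (Xk n k L) - measure_pmf.expectation (kingman n) (\<lambda>L. real (Xk n k L))) *
                  (real (Xk n l L) - measure_pmf.expectation (kingman n) (\<lambda>L. real (Xk n l L))))
           = - (4 * real k * (real n - real l - 1)) / ((real n - 1)^2 * (real n - 2))"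
      unfolding K_def .
  qed
qed

end
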